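(* Let $X_1,\dots,X_n$ be Polish spaces, $1\le k<n$, and $\mu_\alpha\in\mathcal{P}(X_\alpha)$ for $\alpha\in\mathcal{I}_{nk}$. Let $A\subseteq X$ be a measurable set with $\mathrm{sth}(A)=0$. Then there exist measurable sets $Y_\alpha\subseteq X_\alpha$, $\alpha\in\mathcal{I}_{nk}$, with $\mu_\alpha(Y_\alpha)=0$ for all $\alpha$ and $A\subseteq\bigcup_{\alpha\in\mathcal{I}_{nk}}\mathrm{Pr}_\alpha^{-1}(Y_\alpha)$.
   Context: $X=\prod_iX_i$; $\mathcal{I}_{nk}$ is the family of $k$-element subsets of $\{1,\dots,n\}$; $X_\alpha=\prod_{i\in\alpha}X_i$, $\mathrm{Pr}_\alpha:X\to X_\alpha$ the projection. The proper $(n,k)$-thickness of a measurable $A\subseteq X$ is $\mathrm{sth}(A)=\inf\{\sum_{\alpha\in\mathcal{I}_{nk}}\mu_\alpha(Y_\alpha):\ Y_\alpha\subseteq X_\alpha\text{ measurable},\ A\subseteq\bigcup_{\alpha\in\mathcal{I}_{nk}}\mathrm{Pr}_\alpha^{-1}(Y_\alpha)\}$. *)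

theory Defs
  imports "HOL-Probability.Probability"
begin

definition Polish_space :: "'a topology \<Rightarrow> bool" where
  "Polish_space T \<longleftrightarrow> completely_metrizable_space T \<and> separable_space T"

definition borel_of :: "'a topology \<Rightarrow> 'a measure" where
  "borel_of T = sigma (topspace T) {U. openin T U}"

definition I_nk :: "nat \<Rightarrow> nat \<Rightarrow> nat set set" where
  "I_nk n k = {\<alpha>. \<alpha> \<subseteq> {1..n} \<and> card \<alpha> = k}"

text \<open>X_alpha = product of X_i over i in alpha (points are extensional functions on alpha).\<close>
abbreviation X_sub :: "(nat \<Rightarrow> 'a topology) \<Rightarrow> nat set \<Rightarrow> (nat \<Rightarrow> 'a) topology" where
  "X_sub X \<alpha> \<equiv> product_topology X \<alpha>"

definition Pr_preimage :: "(nat \<Rightarrow> 'a topology) \<Rightarrow> nat \<Rightarrow> nat set \<Rightarrow> (nat \<Rightarrow> 'a) set \<Rightarrow> (nat \<Rightarrow> 'a) set" where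
  "Pr_preimage X n \<alpha> Y = {x \<in> topspace (product_topology X {1..n}). restrict x \<alpha> \<in> Y}"

definition sth :: "(nat \<Rightarrow> 'a topology) \<Rightarrow> nat \<Rightarrow> nat \<Rightarrow> (nat set \<Rightarrow> (nat \<Rightarrow> 'a) measure)
    \<Rightarrow> (nat \<Rightarrow> 'a) set \<Rightarrow> ennreal" where
  "sth X n k \<mu> A = Inf {(\<Sum>\<alpha>\<in>I_nk n k. emeasure (\<mu> \<alpha>) (Y \<alpha>)) | Y.
      (\<forall>\<alpha>\<in>I_nk n k. Y \<alpha> \<in> sets (\<mu> \<alpha>)) \<and> A \<subseteq> (\<Union>\<alpha>\<in>I_nk n k. Pr_preimage X n \<alpha> (Y \<alpha>))}"

end

theory Submission
  imports Defs
begin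

lemma mem_limsup_iff: "x \<in> limsup (F :: nat \<Rightarrow> 'b set) \<longleftrightarrow> (\<forall>N. \<exists>m\<ge>N. x \<in> F m)"
  by (auto simp: limsup_INF_SUP)

theorem mainTheorem11:
  fixes X :: "nat \<Rightarrow> 'a topology"
    and n k :: nat
    and \<mu> :: "nat set \<Rightarrow> (nat \<Rightarrow> 'a) measure"
    and A :: "(nat \<Rightarrow> 'a) set"
  assumes polish: "\<And>i. i \<in> {1..n} \<Longrightarrow> Polish_space (X i)"
    and k: "1 \<le> k" "k < n"
    and prob: "\<And>\<alpha>. \<alpha> \<in> I_nk n k \<Longrightarrow> prob_space (\<mu> \<alpha>)"
    and sets_mu: "\<And>\<alpha>. \<alpha> \<in> I_nk n k \<Longrightarrow> sets (\<mu> \<alpha>) = sets (borel_of (X_sub X \<alpha>))"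
    and A_meas: "A \<in> sets (borel_of (product_topology X {1..n}))"
    and sth0: "sth X n k \<mu> A = 0"
  shows "\<exists>Y. (\<forall>\<alpha>\<in>I_nk n k. Y \<alpha> \<in> sets (\<mu> \<alpha>) \<and> emeasure (\<mu> \<alpha>) (Y \<alpha>) = 0)
            \<and> A \<subseteq> (\<Union>\<alpha>\<in>I_nk n k. Pr_preimage X n \<alpha> (Y \<alpha>))"
proof -
  let ?I = "I_nk n k"
  have finI: "finite ?I"
    by (rule finite_subset[of _ "Pow {1..n}"]) (auto simp: I_nk_def)
  have "\<exists>Y. (\<forall>\<alpha>\<in>?I. Y \<alpha> \<in> sets (\<mu> \<alpha>)) \<and> A \<subseteq> (\<Union>\<alpha>\<in>?I. Pr_preimage X n \<alpha> (Y \<alpha>))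
        \<and> (\<Sum>\<alpha>\<in>?I. emeasure (\<mu> \<alpha>) (Y \<alpha>)) < ennreal ((1/2)^m)" for m
  proof -
    have "Inf {(\<Sum>\<alpha>\<in>?I. emeasure (\<mu> \<alpha>) (Y \<alpha>)) | Y.
      (\<forall>\<alpha>\<in>?I. Y \<alpha> \<in> sets (\<mu> \<alpha>)) \<and> A \<subseteq> (\<Union>\<alpha>\<in>?I. Pr_preimage X n \<alpha> (Y \<alpha>))} < ennreal ((1/2)^m)"
      using sth0 unfolding sth_def by simp
    then show ?thesis by (auto simp: Inf_less_iff)
  qed
  then obtain Ym where Ym: "\<And>m. (\<forall>\<alpha>\<in>?I. Ym m \<alpha> \<in> sets (\<mu> \<alpha>))"
    "\<And>m. A \<subseteq> (\<Union>\<alpha>\<in>?I. Pr_preimage X n \<alpha> (Ym m \<alpha>))"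
    "\<And>m. (\<Sum>\<alpha>\<in>?I. emeasure (\<mu> \<alpha>) (Ym m \<alpha>)) < ennreal ((1/2)^m)"
    by metis
  define Y where "Y \<alpha> = limsup (\<lambda>m. Ym m \<alpha>)" for \<alpha>
  have null: "Y \<alpha> \<in> null_sets (\<mu> \<alpha>)" if a: "\<alpha> \<in> ?I" for \<alpha>
  proof -
    interpret prob_space "\<mu> \<alpha>" using prob a .
    have le: "emeasure (\<mu> \<alpha>) (Ym m \<alpha>) \<le> ennreal ((1/2)^m)" for m
    proof -
      have "emeasure (\<mu> \<alpha>) (Ym m \<alpha>) \<le> (\<Sum>\<alpha>\<in>?I. emeasure (\<mu> \<alpha>) (Ym m \<alpha>))"
        using a finI by (intro member_le_sum) auto
      then show ?thesis using Ym(3)[of m] by simp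
    qed
    have mle: "measure (\<mu> \<alpha>) (Ym m \<alpha>) \<le> (1/2)^m" for m
      using le[of m] by (simp add: emeasure_eq_measure)
    have "summable (\<lambda>m. measure (\<mu> \<alpha>) (Ym m \<alpha>))"
      by (rule summable_comparison_test[of _ "\<lambda>m. (1/2::real)^m"]) (auto intro: mle)
    then show ?thesis unfolding Y_def
      using Ym(1) a by (intro borel_cantelli_limsup1) (auto simp: emeasure_eq_measure)
  qed
  have cover: "A \<subseteq> (\<Union>\<alpha>\<in>?I. Pr_preimage X n \<alpha> (Y \<alpha>))"
  proof
    fix x assume xA: "x \<in> A"
    have xin: "\<forall>m. \<exists>\<alpha>\<in>?I. x \<in> Pr_preimage X n \<alpha> (Ym m \<alpha>)" using Ym(2) xA by blast
    show "x \<in> (\<Union>\<alpha>\<in>?I. Pr_preimage X n \<alpha> (Y \<alpha>))"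
    proof (rule ccontr)
      assume nx: "x \<notin> (\<Union>\<alpha>\<in>?I. Pr_preimage X n \<alpha> (Y \<alpha>))"
      have "\<forall>\<alpha>\<in>?I. eventually (\<lambda>m. x \<notin> Pr_preimage X n \<alpha> (Ym m \<alpha>)) sequentially"
      proof
        fix \<alpha> assume a: "\<alpha> \<in> ?I"
        have xt: "x \<in> topspace (product_topology X {1..n})"
          using xin unfolding Pr_preimage_def by blast
        have "restrict x \<alpha> \<notin> Y \<alpha>" using nx a xt by (auto simp: Pr_preimage_def)
        then obtain N where "\<forall>m\<ge>N. restrict x \<alpha> \<notin> Ym m \<alpha>"
          unfolding Y_def mem_limsup_iff by blast
        then show "eventually (\<lambda>m. x \<notin> Pr_preimage X n \<alpha> (Ym m \<alpha>)) sequentially"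
          by (auto simp: eventually_sequentially Pr_preimage_def)
      qed
      then have "eventually (\<lambda>m. \<forall>\<alpha>\<in>?I. x \<notin> Pr_preimage X n \<alpha> (Ym m \<alpha>)) sequentially"
        using finI by (simp add: eventually_ball_finite)
      then obtain m where "\<forall>\<alpha>\<in>?I. x \<notin> Pr_preimage X n \<alpha> (Ym m \<alpha>)"
        using eventually_sequentially by auto
      then show False using xin by blast
    qed
  qed
  show ?thesis using null cover by (auto intro!: exI[of _ Y] simp: null_sets_def)
qed

end
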